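(* Let $\omega=\{\omega_n\}_{n\ge 0}$ be a valid weight, let $a\in\mathbb{C}\setminus\{0\}$, and let $V_a=M_{a-z}^*M_{a-z}$ act on $H^2_\omega$. For each $\lambda\in\sigma_{\mathrm p}(V_a)$, every associated eigenfunction $h(z)=\sum_{n\ge0}h_nz^n\in H^2_\omega$ (i.e. $h\neq 0$ with $V_ah=\lambda h$) has Taylor coefficients satisfying \[ |a|^2h_n - a h_{n+1}\frac{\omega_{n+1}}{\omega_n} - \overline{a}\,h_{n-1} + h_n\frac{\omega_{n+1}}{\omega_n}=\lambda h_n\qquad\text{for each } n\ge 0, \] with the convention $h_{-1}=0$; this recurrence relation has a unique solution up to normalization (i.e. up to multiplication by a scalar), and the eigenfunction is given by it.
   Context: A weight $\omega=\{\omega_n\}_{n\ge0}$ is called valid if it is a monotonic sequence of positive numbers with $\omega_0=1$, $\lim_{n\to\infty}\omega_{n+1}/\omega_n=1$ and $\sum_{n=0}^\infty(1-\omega_{n+1}/\omega_n)^2<\infty$. The weighted Hardy space $H^2_\omega$ is the Hilbert space of holomorphic functions $f(z)=\sum_{n\ge0}a_nz^n$ on the unit disc $\mathbb{D}$ with $\|f\|_\omega^2=\sum_{n\ge0}|a_n|^2\omega_n<\infty$, with inner product $\langle f,g\rangle=\sum_n a_n\overline{b_n}\omega_n$. For a polynomial $\varphi$, $M_\varphi$ denotes the (bounded) operator of multiplication by $\varphi$ on $H^2_\omega$ and $M_\varphi^*$ its Hilbert space adjoint. $\sigma_{\mathrm p}$ denotes the point spectrum (set of eigenvalues). *)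

theory Defs
  imports "HOL-Analysis.Analysis"
begin

text \<open>Functions in the weighted Hardy space are represented by their Taylor
  coefficient sequences h :: nat \<Rightarrow> complex, f(z) = sum of h n * z^n.\<close>

definition valid_weight :: "(nat \<Rightarrow> real) \<Rightarrow> bool" where
  "valid_weight \<omega> \<longleftrightarrow>
     (mono \<omega> \<or> antimono \<omega>) \<and> (\<forall>n. \<omega> n > 0) \<and> \<omega> 0 = 1 \<and>
     (\<lambda>n. \<omega> (Suc n) / \<omega> n) \<longlonglongrightarrow> 1 \<and>
     summable (\<lambda>n. (1 - \<omega> (Suc n) / \<omega> n)\<^sup>2)"

definition in_H2 :: "(nat \<Rightarrow> real) \<Rightarrow> (nat \<Rightarrow> complex) \<Rightarrow> bool" where
  "in_H2 \<omega> h \<longleftrightarrow> summable (\<lambda>n. (cmod (h n))\<^sup>2 * \<omega> n)"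

definition winner :: "(nat \<Rightarrow> real) \<Rightarrow> (nat \<Rightarrow> complex) \<Rightarrow> (nat \<Rightarrow> complex) \<Rightarrow> complex" where
  "winner \<omega> f g = (\<Sum>n. f n * cnj (g n) * complex_of_real (\<omega> n))"

definition mult_az :: "complex \<Rightarrow> (nat \<Rightarrow> complex) \<Rightarrow> (nat \<Rightarrow> complex)" where
  "mult_az a h = (\<lambda>n. a * h n - (if n = 0 then 0 else h (n - 1)))"

definition mult_az_adj :: "(nat \<Rightarrow> real) \<Rightarrow> complex \<Rightarrow> (nat \<Rightarrow> complex) \<Rightarrow> (nat \<Rightarrow> complex)" where
  "mult_az_adj \<omega> a u = (THE v. in_H2 \<omega> v \<and>
      (\<forall>f. in_H2 \<omega> f \<longrightarrow> winner \<omega> (mult_az a f) u = winner \<omega> f v))"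

definition V_op :: "(nat \<Rightarrow> real) \<Rightarrow> complex \<Rightarrow> (nat \<Rightarrow> complex) \<Rightarrow> (nat \<Rightarrow> complex)" where
  "V_op \<omega> a h = mult_az_adj \<omega> a (mult_az a h)"

definition point_spectrum_V :: "(nat \<Rightarrow> real) \<Rightarrow> complex \<Rightarrow> complex set" where
  "point_spectrum_V \<omega> a = {lam. \<exists>h. in_H2 \<omega> h \<and> h \<noteq> (\<lambda>_. 0) \<and> V_op \<omega> a h = (\<lambda>n. lam * h n)}"

definition eig_rec :: "(nat \<Rightarrow> real) \<Rightarrow> complex \<Rightarrow> complex \<Rightarrow> (nat \<Rightarrow> complex) \<Rightarrow> nat \<Rightarrow> bool" where
  "eig_rec \<omega> a lam h n \<longleftrightarrow>
     complex_of_real ((cmod a)\<^sup>2) * h n - a * h (Suc n) * complex_of_real (\<omega> (Suc n) / \<omega> n)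
       - cnj a * (if n = 0 then 0 else h (n - 1))
       + h n * complex_of_real (\<omega> (Suc n) / \<omega> n) = lam * h n"

end

theory Submission
  imports Defs
begin

lemma ratio_bound:
  assumes "valid_weight \<omega>"
  obtains C where "C > 0" "\<And>n. \<omega> (Suc n) \<le> C * \<omega> n"
proof -
  have pos: "\<And>n. \<omega> n > 0" using assms by (simp add: valid_weight_def)
  have "convergent (\<lambda>n. \<omega> (Suc n) / \<omega> n)" using assms unfolding valid_weight_def convergent_def by blast
  then have "Bseq (\<lambda>n. \<omega> (Suc n) / \<omega> n)" by (rule convergent_imp_Bseq)
  then obtain K where K: "K > 0" "\<And>n. norm (\<omega> (Suc n) / \<omega> n) \<le> K" by (auto elim: BseqE)
  have "\<omega> (Suc n) \<le> K * \<omega> n" for n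
  proof -
    have "\<omega> (Suc n) / \<omega> n \<le> K" using K(2)[of n] pos[of n] pos[of "Suc n"] by simp
    then show ?thesis using pos[of n] by (simp add: divide_le_eq)
  qed
  then show ?thesis using K(1) that by blast
qed

lemma H2_lin:
  assumes "in_H2 \<omega> f" "in_H2 \<omega> g" "\<And>n. \<omega> n > 0"
  shows "in_H2 \<omega> (\<lambda>n. c * f n + d * g n)"
  unfolding in_H2_def
proof (rule summable_comparison_test[where g = "\<lambda>n. 2 * (cmod c)\<^sup>2 * ((cmod (f n))\<^sup>2 * \<omega> n) + 2 * (cmod d)\<^sup>2 * ((cmod (g n))\<^sup>2 * \<omega> n)"])
  show "summable (\<lambda>n. 2 * (cmod c)\<^sup>2 * ((cmod (f n))\<^sup>2 * \<omega> n) + 2 * (cmod d)\<^sup>2 * ((cmod (g n))\<^sup>2 * \<omega> n))"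
    using assms(1,2) unfolding in_H2_def by (intro summable_add summable_mult)
  show "\<exists>N. \<forall>n\<ge>N. norm ((cmod (c * f n + d * g n))\<^sup>2 * \<omega> n) \<le> 2 * (cmod c)\<^sup>2 * ((cmod (f n))\<^sup>2 * \<omega> n) + 2 * (cmod d)\<^sup>2 * ((cmod (g n))\<^sup>2 * \<omega> n)"
  proof (intro exI allI impI)
    fix n
    have w: "\<omega> n > 0" using assms(3) .
    have t: "cmod (c * f n + d * g n) \<le> cmod c * cmod (f n) + cmod d * cmod (g n)"
      by (metis norm_mult norm_triangle_ineq)
    have "(cmod (c * f n + d * g n))\<^sup>2 \<le> (cmod c * cmod (f n) + cmod d * cmod (g n))\<^sup>2"
      using t by (simp add: power_mono)
    also have "\<dots> \<le> 2 * (cmod c)\<^sup>2 * (cmod (f n))\<^sup>2 + 2 * (cmod d)\<^sup>2 * (cmod (g n))\<^sup>2"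
    proof -
      have sq: "(A + B)\<^sup>2 \<le> 2 * A\<^sup>2 + 2 * B\<^sup>2" for A B :: real
      proof -
        have "0 \<le> (A - B)\<^sup>2" by simp
        then show ?thesis by (simp add: power2_diff power2_sum)
      qed
      show ?thesis using sq[of "cmod c * cmod (f n)" "cmod d * cmod (g n)"] by (simp add: power_mult_distrib)
    qed
    finally have fin: "(cmod (c * f n + d * g n))\<^sup>2 \<le> 2 * (cmod c)\<^sup>2 * (cmod (f n))\<^sup>2 + 2 * (cmod d)\<^sup>2 * (cmod (g n))\<^sup>2" .
    have "(cmod (c * f n + d * g n))\<^sup>2 * \<omega> n \<le> (2 * (cmod c)\<^sup>2 * (cmod (f n))\<^sup>2 + 2 * (cmod d)\<^sup>2 * (cmod (g n))\<^sup>2) * \<omega> n"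
      using fin w by (intro mult_right_mono) auto
    then show "norm ((cmod (c * f n + d * g n))\<^sup>2 * \<omega> n) \<le> 2 * (cmod c)\<^sup>2 * ((cmod (f n))\<^sup>2 * \<omega> n) + 2 * (cmod d)\<^sup>2 * ((cmod (g n))\<^sup>2 * \<omega> n)"
      using w by (simp add: abs_mult algebra_simps)
  qed
qed

lemma H2_shift:
  assumes "in_H2 \<omega> f" "\<And>n. \<omega> n > 0" "\<And>n. \<omega> (Suc n) \<le> C * \<omega> n"
  shows "in_H2 \<omega> (\<lambda>n. if n = 0 then 0 else f (n - 1))"
proof -
  have "summable (\<lambda>n. (cmod (f n))\<^sup>2 * \<omega> (Suc n))"
  proof (rule summable_comparison_test[where g = "\<lambda>n. C * ((cmod (f n))\<^sup>2 * \<omega> n)"])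
    show "summable (\<lambda>n. C * ((cmod (f n))\<^sup>2 * \<omega> n))" using assms(1) unfolding in_H2_def by (rule summable_mult)
    show "\<exists>N. \<forall>n\<ge>N. norm ((cmod (f n))\<^sup>2 * \<omega> (Suc n)) \<le> C * ((cmod (f n))\<^sup>2 * \<omega> n)"
    proof (intro exI allI impI)
      fix n
      have "(cmod (f n))\<^sup>2 * \<omega> (Suc n) \<le> (cmod (f n))\<^sup>2 * (C * \<omega> n)"
        using assms(3)[of n] by (simp add: mult_left_mono)
      then show "norm ((cmod (f n))\<^sup>2 * \<omega> (Suc n)) \<le> C * ((cmod (f n))\<^sup>2 * \<omega> n)"
        using assms(2)[of "Suc n"] by (simp add: abs_mult algebra_simps)
    qed
  qed
  then show ?thesis unfolding in_H2_def by (subst summable_Suc_iff[symmetric]) simp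
qed

lemma H2_back:
  assumes "in_H2 \<omega> f" "\<And>n. \<omega> n > 0" "\<And>n. \<omega> (Suc n) \<le> C * \<omega> n"
  shows "in_H2 \<omega> (\<lambda>n. f (Suc n) * complex_of_real (\<omega> (Suc n) / \<omega> n))"
  unfolding in_H2_def
proof (rule summable_comparison_test[where g = "\<lambda>n. C * ((cmod (f (Suc n)))\<^sup>2 * \<omega> (Suc n))"])
  show "summable (\<lambda>n. C * ((cmod (f (Suc n)))\<^sup>2 * \<omega> (Suc n)))"
    using assms(1) unfolding in_H2_def by (intro summable_mult) (subst summable_Suc_iff)
  show "\<exists>N. \<forall>n\<ge>N. norm ((cmod (f (Suc n) * complex_of_real (\<omega> (Suc n) / \<omega> n)))\<^sup>2 * \<omega> n) \<le> C * ((cmod (f (Suc n)))\<^sup>2 * \<omega> (Suc n))"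
  proof (intro exI allI impI)
    fix n
    have p0: "\<omega> n > 0" "\<omega> (Suc n) > 0" using assms(2) by auto
    have e: "(cmod (f (Suc n) * complex_of_real (\<omega> (Suc n) / \<omega> n)))\<^sup>2 * \<omega> n
        = ((cmod (f (Suc n)))\<^sup>2 * \<omega> (Suc n)) * (\<omega> (Suc n) / \<omega> n)"
      using p0 by (simp only: norm_mult norm_of_real) (simp add: power_mult_distrib power2_eq_square field_simps)
    have r: "\<omega> (Suc n) / \<omega> n \<le> C" using assms(3)[of n] p0 by (simp add: divide_le_eq)
    have "((cmod (f (Suc n)))\<^sup>2 * \<omega> (Suc n)) * (\<omega> (Suc n) / \<omega> n) \<le> ((cmod (f (Suc n)))\<^sup>2 * \<omega> (Suc n)) * C"
      using r p0 by (intro mult_left_mono) auto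
    then show "norm ((cmod (f (Suc n) * complex_of_real (\<omega> (Suc n) / \<omega> n)))\<^sup>2 * \<omega> n) \<le> C * ((cmod (f (Suc n)))\<^sup>2 * \<omega> (Suc n))"
      using e p0 by (simp add: abs_mult algebra_simps)
  qed
qed

lemma winner_abs:
  assumes "in_H2 \<omega> f" "in_H2 \<omega> g" "\<And>n. \<omega> n > 0"
  shows "summable (\<lambda>n. f n * cnj (g n) * complex_of_real (\<omega> n))"
proof (rule summable_norm_cancel, rule summable_comparison_test[where g = "\<lambda>n. (cmod (f n))\<^sup>2 * \<omega> n + (cmod (g n))\<^sup>2 * \<omega> n"])
  show "summable (\<lambda>n. (cmod (f n))\<^sup>2 * \<omega> n + (cmod (g n))\<^sup>2 * \<omega> n)"
    using assms unfolding in_H2_def by (intro summable_add)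
  show "\<exists>N. \<forall>n\<ge>N. norm (norm (f n * cnj (g n) * complex_of_real (\<omega> n))) \<le> (cmod (f n))\<^sup>2 * \<omega> n + (cmod (g n))\<^sup>2 * \<omega> n"
  proof (intro exI allI impI)
    fix n
    have w: "\<omega> n > 0" using assms(3) .
    have "cmod (f n) * cmod (g n) \<le> (cmod (f n))\<^sup>2 + (cmod (g n))\<^sup>2"
    proof -
      have "0 \<le> (cmod (f n) - cmod (g n))\<^sup>2" by simp
      moreover have "0 \<le> cmod (f n) * cmod (g n)" by simp
      moreover have "0 \<le> (cmod (f n))\<^sup>2 + (cmod (g n))\<^sup>2 - 2 * (cmod (f n) * cmod (g n))"
        using calculation(1) by (simp add: power2_diff algebra_simps)
      ultimately show ?thesis by linarith
    qed
    then have "cmod (f n) * cmod (g n) * \<omega> n \<le> ((cmod (f n))\<^sup>2 + (cmod (g n))\<^sup>2) * \<omega> n"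
      using w by (intro mult_right_mono) auto
    then show "norm (norm (f n * cnj (g n) * complex_of_real (\<omega> n))) \<le> (cmod (f n))\<^sup>2 * \<omega> n + (cmod (g n))\<^sup>2 * \<omega> n"
      using w by (simp add: norm_mult algebra_simps)
  qed
qed

lemma winner_delta:
  "winner \<omega> (\<lambda>m. if m = n then 1 else 0) v = cnj (v n) * complex_of_real (\<omega> n)"
proof -
  have "(\<lambda>m. (if m = n then 1 else 0) * cnj (v m) * complex_of_real (\<omega> m))
      = (\<lambda>m. if m = n then cnj (v m) * complex_of_real (\<omega> m) else 0)" by auto
  then show ?thesis unfolding winner_def using sums_single[of n "\<lambda>m. cnj (v m) * complex_of_real (\<omega> m)"]
    by (simp add: sums_iff)
qed

lemma H2_delta: "in_H2 \<omega> (\<lambda>m. if m = n then 1 else 0)"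
proof -
  have "(\<lambda>m. (cmod (if m = n then 1 else 0 :: complex))\<^sup>2 * \<omega> m) = (\<lambda>m. if m = n then \<omega> m else 0)" by auto
  then show ?thesis unfolding in_H2_def using sums_single[of n \<omega>] sums_summable by metis
qed

lemma adj_char:
  assumes pos: "\<And>n. \<omega> n > 0" and bd: "\<And>n. \<omega> (Suc n) \<le> C * \<omega> n" and u: "in_H2 \<omega> u"
  shows "mult_az_adj \<omega> a u = (\<lambda>n. cnj a * u n - u (Suc n) * complex_of_real (\<omega> (Suc n) / \<omega> n))"
proof -
  define w where "w = (\<lambda>n. u (Suc n) * complex_of_real (\<omega> (Suc n) / \<omega> n))"
  define v0 where "v0 = (\<lambda>n. cnj a * u n - w n)"
  have w: "in_H2 \<omega> w" unfolding w_def by (rule H2_back[OF u pos bd])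
  have v0: "in_H2 \<omega> v0"
    using H2_lin[OF u w pos, of "cnj a" "-1"] unfolding v0_def by simp
  have key: "winner \<omega> (mult_az a f) u = winner \<omega> f v0" if f: "in_H2 \<omega> f" for f
  proof -
    define sf where "sf = (\<lambda>n. if n = 0 then 0 else f (n - 1))"
    have sf: "in_H2 \<omega> sf" unfolding sf_def by (rule H2_shift[OF f pos bd])
    have m: "mult_az a f = (\<lambda>n. a * f n - sf n)" unfolding mult_az_def sf_def by auto
    have s1: "summable (\<lambda>n. f n * cnj (u n) * complex_of_real (\<omega> n))" by (rule winner_abs[OF f u pos])
    have s2: "summable (\<lambda>n. sf n * cnj (u n) * complex_of_real (\<omega> n))" by (rule winner_abs[OF sf u pos])
    have s3: "summable (\<lambda>n. f n * cnj (w n) * complex_of_real (\<omega> n))" by (rule winner_abs[OF f w pos])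
    have sh: "(\<Sum>n. sf n * cnj (u n) * complex_of_real (\<omega> n)) = (\<Sum>n. f n * cnj (w n) * complex_of_real (\<omega> n))"
    proof -
      have eq: "(\<lambda>n. sf (Suc n) * cnj (u (Suc n)) * complex_of_real (\<omega> (Suc n)))
          = (\<lambda>n. f n * cnj (w n) * complex_of_real (\<omega> n))"
      proof
        fix n
        have "\<omega> n > 0" by (rule pos)
        then show "sf (Suc n) * cnj (u (Suc n)) * complex_of_real (\<omega> (Suc n)) = f n * cnj (w n) * complex_of_real (\<omega> n)"
          unfolding sf_def w_def by (simp add: field_simps)
      qed
      have "(\<lambda>n. f n * cnj (w n) * complex_of_real (\<omega> n)) sums (\<Sum>n. f n * cnj (w n) * complex_of_real (\<omega> n))"
        using s3 by (simp add: summable_sums)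
      then have "(\<lambda>n. sf (Suc n) * cnj (u (Suc n)) * complex_of_real (\<omega> (Suc n))) sums (\<Sum>n. f n * cnj (w n) * complex_of_real (\<omega> n))"
        using eq by simp
      then have "(\<lambda>n. sf n * cnj (u n) * complex_of_real (\<omega> n)) sums (\<Sum>n. f n * cnj (w n) * complex_of_real (\<omega> n))"
        by (subst (asm) sums_Suc_iff) (simp add: sf_def)
      then show ?thesis by (simp add: sums_iff)
    qed
    have "winner \<omega> (mult_az a f) u = (\<Sum>n. a * (f n * cnj (u n) * complex_of_real (\<omega> n)) - sf n * cnj (u n) * complex_of_real (\<omega> n))"
      unfolding winner_def m by (simp add: algebra_simps)
    also have "\<dots> = a * (\<Sum>n. f n * cnj (u n) * complex_of_real (\<omega> n)) - (\<Sum>n. sf n * cnj (u n) * complex_of_real (\<omega> n))"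
      using suminf_diff[OF summable_mult[OF s1, of a] s2] suminf_mult[OF s1, of a] by simp
    also have "\<dots> = a * (\<Sum>n. f n * cnj (u n) * complex_of_real (\<omega> n)) - (\<Sum>n. f n * cnj (w n) * complex_of_real (\<omega> n))"
      using sh by simp
    also have "\<dots> = (\<Sum>n. a * (f n * cnj (u n) * complex_of_real (\<omega> n)) - f n * cnj (w n) * complex_of_real (\<omega> n))"
      using suminf_diff[OF summable_mult[OF s1, of a] s3] suminf_mult[OF s1, of a] by simp
    also have "\<dots> = winner \<omega> f v0"
      unfolding winner_def v0_def by (simp add: algebra_simps)
    finally show ?thesis .
  qed
  have "mult_az_adj \<omega> a u = v0"
    unfolding mult_az_adj_def
  proof (rule the_equality)
    show "in_H2 \<omega> v0 \<and> (\<forall>f. in_H2 \<omega> f \<longrightarrow> winner \<omega> (mult_az a f) u = winner \<omega> f v0)"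
      using v0 key by blast
    fix v assume P: "in_H2 \<omega> v \<and> (\<forall>f. in_H2 \<omega> f \<longrightarrow> winner \<omega> (mult_az a f) u = winner \<omega> f v)"
    show "v = v0"
    proof
      fix n
      have "winner \<omega> (\<lambda>m. if m = n then 1 else 0) v = winner \<omega> (\<lambda>m. if m = n then 1 else 0) v0"
        using P key[OF H2_delta] H2_delta by metis
      then have "cnj (v n) * complex_of_real (\<omega> n) = cnj (v0 n) * complex_of_real (\<omega> n)"
        by (simp add: winner_delta)
      then have "cnj (v n) = cnj (v0 n)" using pos[of n] by simp
      then show "v n = v0 n" by simp
    qed
  qed
  then show ?thesis unfolding v0_def w_def .
qed

lemma rec_step:
  assumes pos: "\<And>n. \<omega> n > 0" and a: "a \<noteq> 0"
    and ek: "eig_rec \<omega> a lam k n" and eg: "eig_rec \<omega> a lam g n"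
    and h0: "k n = c * g n" and h1: "(if n = 0 then 0 else k (n - 1)) = c * (if n = 0 then 0 else g (n - 1))"
  shows "k (Suc n) = c * g (Suc n)"
proof -
  define rr where "rr = complex_of_real (\<omega> (Suc n) / \<omega> n)"
  define A where "A = complex_of_real ((cmod a)\<^sup>2)"
  define kp where "kp = (if n = 0 then 0 else k (n - 1))"
  define gp where "gp = (if n = 0 then 0 else g (n - 1))"
  have rr: "rr \<noteq> 0" unfolding rr_def using pos[of n] pos[of "Suc n"] by simp
  have 1: "A * k n - a * k (Suc n) * rr - cnj a * kp + k n * rr = lam * k n"
    using ek unfolding eig_rec_def rr_def A_def kp_def .
  have 2: "A * g n - a * g (Suc n) * rr - cnj a * gp + g n * rr = lam * g n"
    using eg unfolding eig_rec_def rr_def A_def gp_def .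
  have 3: "kp = c * gp" using h1 unfolding kp_def gp_def .
  have "a * rr * (k (Suc n) - c * g (Suc n)) = 0"
  proof -
    have "a * rr * (k (Suc n) - c * g (Suc n)) = (A * k n - cnj a * kp + k n * rr - lam * k n) - c * (A * g n - cnj a * gp + g n * rr - lam * g n)"
      using 1 2 by (simp add: algebra_simps)
    also have "\<dots> = 0" using h0 3 by (simp add: algebra_simps)
    finally show ?thesis .
  qed
  then show ?thesis using a rr by simp
qed

lemma rec_unique:
  assumes pos: "\<And>n. \<omega> n > 0" and a: "a \<noteq> 0"
    and ek: "\<forall>n. eig_rec \<omega> a lam k n" and eg: "\<forall>n. eig_rec \<omega> a lam g n"
    and h0: "k 0 = c * g 0"
  shows "k = (\<lambda>n. c * g n)"
proof -
  have "k n = c * g n \<and> k (Suc n) = c * g (Suc n)" for n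
  proof (induction n)
    case 0
    have "k (Suc 0) = c * g (Suc 0)"
      by (rule rec_step[OF pos a ek[rule_format] eg[rule_format] h0]) simp
    then show ?case using h0 by simp
  next
    case (Suc n)
    have "k (Suc (Suc n)) = c * g (Suc (Suc n))"
      by (rule rec_step[OF pos a ek[rule_format] eg[rule_format]]) (use Suc in auto)
    then show ?case using Suc by simp
  qed
  then show ?thesis by auto
qed

theorem lemma3p1:
  fixes \<omega> :: "nat \<Rightarrow> real" and a lam :: complex and h :: "nat \<Rightarrow> complex"
  assumes "valid_weight \<omega>" and "a \<noteq> 0"
    and "lam \<in> point_spectrum_V \<omega> a"
    and "in_H2 \<omega> h" and "h \<noteq> (\<lambda>_. 0)" and "V_op \<omega> a h = (\<lambda>n. lam * h n)"
  shows "(\<forall>n. eig_rec \<omega> a lam h n) \<and>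
         (\<forall>k. (\<forall>n. eig_rec \<omega> a lam k n) \<longrightarrow> (\<exists>c. k = (\<lambda>n. c * h n)))"
proof -
  have pos: "\<And>n. \<omega> n > 0" using assms(1) by (simp add: valid_weight_def)
  obtain C where C: "C > 0" "\<And>n. \<omega> (Suc n) \<le> C * \<omega> n" using ratio_bound[OF assms(1)] by blast
  define sh where "sh = (\<lambda>n. if n = 0 then 0 else h (n - 1))"
  have sh: "in_H2 \<omega> sh" unfolding sh_def by (rule H2_shift[OF assms(4) pos C(2)])
  have m: "mult_az a h = (\<lambda>n. a * h n + (-1) * sh n)" unfolding mult_az_def sh_def by auto
  have u: "in_H2 \<omega> (mult_az a h)" unfolding m by (rule H2_lin[OF assms(4) sh pos])
  have V: "V_op \<omega> a h = (\<lambda>n. cnj a * mult_az a h n - mult_az a h (Suc n) * complex_of_real (\<omega> (Suc n) / \<omega> n))"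
    unfolding V_op_def by (rule adj_char[OF pos C(2) u])
  have rec: "\<forall>n. eig_rec \<omega> a lam h n"
  proof
    fix n
    have "cnj a * mult_az a h n - mult_az a h (Suc n) * complex_of_real (\<omega> (Suc n) / \<omega> n) = lam * h n"
      using fun_cong[OF trans[OF V[symmetric] assms(6)], of n] by simp
    moreover have "cnj a * a = complex_of_real ((cmod a)\<^sup>2)" using complex_norm_square[of a] by (simp add: mult.commute)
    moreover have gen: "\<And>(A::complex) ca x y z p r l. ca * (a * x - p) - (a * y - x) * r = l * x \<Longrightarrow> ca * a = A
        \<Longrightarrow> A * x - a * y * r - ca * p + x * r = l * x"
    proof -
      fix A ca x y p r l :: complex
      assume e1: "ca * (a * x - p) - (a * y - x) * r = l * x" and e2: "ca * a = A"
      have "A * x - a * y * r - ca * p + x * r = ca * (a * x - p) - (a * y - x) * r"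
        unfolding e2[symmetric] by (simp add: algebra_simps)
      then show "A * x - a * y * r - ca * p + x * r = l * x" using e1 by simp
    qed
    moreover have "mult_az a h n = a * h n - (if n = 0 then 0 else h (n - 1))" "mult_az a h (Suc n) = a * h (Suc n) - h n"
      unfolding mult_az_def by auto
    ultimately show "eig_rec \<omega> a lam h n"
      unfolding eig_rec_def by metis
  qed
  have h0: "h 0 \<noteq> 0"
  proof
    assume "h 0 = 0"
    then have "h = (\<lambda>n. 0 * h n)" by (intro rec_unique[OF pos assms(2) rec rec]) simp
    then show False using assms(5) by simp
  qed
  have "\<exists>c. k = (\<lambda>n. c * h n)" if k: "\<forall>n. eig_rec \<omega> a lam k n" for k
  proof
    show "k = (\<lambda>n. (k 0 / h 0) * h n)" using rec_unique[OF pos assms(2) k rec, of "k 0 / h 0"] h0 by simp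
  qed
  then show ?thesis using rec by blast
qed

end
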